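(* Let $a>0$, $b>0$, $T>0$, let $f$ be a $1$-periodic, twice continuously differentiable function with $\kappa=\inf_{0\le t\le1}f(t)>0$, and let $\vartheta>0$. For $\varepsilon>0$ let $\gamma(\vartheta,\cdot)$ be the solution on $[0,T]$ of the Riccati equation $$\frac{\partial\gamma(\vartheta,t)}{\partial t}=-2a\gamma(\vartheta,t)-\frac{\gamma(\vartheta,t)^2f(\vartheta t)^2}{\varepsilon^2}+b^2,\qquad\gamma(\vartheta,0)=0.$$ Then for any $t_0\in(0,T]$, $$\sup_{t_0\le t\le T}\Big|\gamma(\vartheta,t)-\frac{b\,\varepsilon}{f(\vartheta t)}\Big|=O(\varepsilon^2)\quad\text{as }\varepsilon\to0.$$
   Context: $\gamma(\vartheta,t)$ is the variance of the Kalman–Bucy filtering error for the signal $Y_t$ (an Ornstein–Uhlenbeck process $dY_t=-aY_tdt+b\,dV_t$) observed through $dX_t=f(\vartheta t)Y_tdt+\varepsilon dW_t$. *)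

theory Defs
  imports "HOL-Analysis.Analysis" "HOL-Library.Landau_Symbols"
begin

end

theory Submission
  imports Defs
begin

lemma barrier:
  fixes h h' :: "real \<Rightarrow> real" and T :: real
  assumes der: "\<And>t. t \<in> {0..T} \<Longrightarrow> (h has_real_derivative h' t) (at t within {0..T})"
    and h0: "h 0 \<le> 0"
    and neg: "\<And>t. t \<in> {0..T} \<Longrightarrow> h t = 0 \<Longrightarrow> h' t < 0"
    and t1: "t1 \<in> {0..T}"
  shows "h t1 \<le> 0"
proof (rule ccontr)
  assume "\<not> h t1 \<le> 0"
  hence pos: "h t1 > 0" by simp
  have cont: "continuous_on {0..T} h"
    using der by (meson DERIV_continuous continuous_on_eq_continuous_within)
  have contt1: "continuous_on {0..t1} h"
    using cont by (rule continuous_on_subset) (use t1 in auto)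
  define Z where "Z = {x \<in> {0..t1}. h x = 0}"
  have "closed Z" unfolding Z_def
    by (rule continuous_closed_preimage_constant[OF contt1]) simp
  moreover have "Z \<noteq> {}"
    using IVT'[of h 0 0 t1, OF h0] pos t1 contt1 unfolding Z_def by auto
  moreover have bdd: "bdd_above Z" unfolding Z_def by (auto intro: bdd_aboveI[where M=t1])
  ultimately have "Sup Z \<in> Z" by (rule closed_contains_Sup[rotated 2])
  then have s: "0 \<le> Sup Z" "Sup Z \<le> t1" "h (Sup Z) = 0" unfolding Z_def by auto
  have sT: "Sup Z \<in> {0..T}" using s t1 by auto
  have "Sup Z < t1" using s pos by (metis order_le_less less_irrefl)
  obtain d where d: "d > 0" "\<And>k. k > 0 \<Longrightarrow> Sup Z + k \<in> {0..T} \<Longrightarrow> k < d \<Longrightarrow> h (Sup Z) > h (Sup Z + k)"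
    using has_real_derivative_neg_dec_right[OF der[OF sT] neg[OF sT s(3)]] by blast
  define k where "k = min (d/2) ((t1 - Sup Z)/2)"
  have k1: "k \<le> d/2" unfolding k_def by (rule min.cobounded1)
  have k2: "k \<le> (t1 - Sup Z)/2" unfolding k_def by (rule min.cobounded2)
  have k3: "k > 0" unfolding k_def using d(1) \<open>Sup Z < t1\<close> by simp
  have k4: "k < d" using k1 d(1) by (simp add: field_simps)
  have k5: "Sup Z + k \<le> t1" using k2 \<open>Sup Z < t1\<close> by (simp add: field_simps)
  note k = k3 k4 k5
  have "h (Sup Z + k) < 0" using d(2)[OF k(1) _ k(2)] k s t1 by auto
  moreover have "continuous_on {Sup Z + k..t1} h"
    using cont by (rule continuous_on_subset) (use k s t1 in auto)
  ultimately obtain z where z: "Sup Z + k \<le> z" "z \<le> t1" "h z = 0"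
    using IVT'[of h "Sup Z + k" 0 t1] pos k by auto
  have "z \<in> Z" unfolding Z_def using z s k by auto
  hence "z \<le> Sup Z" using bdd by (rule cSup_upper)
  thus False using z k by auto
qed

lemma exp_small:
  fixes c \<epsilon> :: real
  assumes "c > 0" "\<epsilon> > 0" "\<epsilon> \<le> c\<^sup>2/4"
  shows "exp (-(c/\<epsilon>)) \<le> \<epsilon>"
proof -
  define x where "x = c/\<epsilon>"
  have x0: "x > 0" unfolding x_def using assms by simp
  have h: "x/2 \<le> exp (x/2)" using exp_ge_add_one_self[of "x/2"] by linarith
  have "(x/2)\<^sup>2 \<le> (exp (x/2))\<^sup>2" by (rule power_mono[OF h]) (use x0 in simp)
  also have "(exp (x/2))\<^sup>2 = exp x" by (simp add: power2_eq_square exp_add[symmetric])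
  finally have h2: "x\<^sup>2/4 \<le> exp x" by (simp add: power_divide)
  have "exp (-x) = 1 / exp x" by (simp add: exp_minus field_simps)
  also have "\<dots> \<le> 1 / (x\<^sup>2/4)" by (rule divide_left_mono[OF h2]) (use x0 in auto)
  also have "\<dots> = 4*\<epsilon>\<^sup>2/c\<^sup>2" unfolding x_def using assms by (simp add: field_simps)
  also have "\<dots> \<le> \<epsilon>"
  proof -
    have "4*\<epsilon> \<le> c\<^sup>2" using assms by simp
    then have "4*\<epsilon>*\<epsilon> \<le> c\<^sup>2 * \<epsilon>" using assms by (intro mult_right_mono) auto
    then show ?thesis using assms by (simp add: field_simps power2_eq_square)
  qed
  finally show ?thesis unfolding x_def .
qed

lemma upper_alg:
  fixes a b \<epsilon> \<kappa> L P gv gd :: real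
  assumes "a>0" "b>0" "\<epsilon>>0" "\<kappa>>0" "\<kappa> \<le> gv" "\<bar>gd\<bar> \<le> L" "b*P \<ge> L/\<kappa>\<^sup>2 + b" "P*\<epsilon> \<le> 1" "P \<ge> 0"
  shows "- 2 * a * (b*\<epsilon>*(1+P*\<epsilon>)/gv) - (b*\<epsilon>*(1+P*\<epsilon>)/gv)\<^sup>2 * gv\<^sup>2 / \<epsilon>\<^sup>2 + b\<^sup>2
          < -(b*\<epsilon>*(1+P*\<epsilon>)) * gd / gv\<^sup>2"
proof -
  define s where "s = 1 + P*\<epsilon>"
  define z where "z = b*\<epsilon> * s/gv"
  have gv0: "gv > 0" using assms by linarith
  have s1: "s \<ge> 1" "s \<le> 2" unfolding s_def using assms by auto
  have z0: "z > 0" unfolding z_def using assms gv0 s1 by simp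
  have zz: "z\<^sup>2 * gv\<^sup>2 / \<epsilon>\<^sup>2 = b\<^sup>2 * s\<^sup>2" unfolding z_def using gv0 assms
    by (simp add: field_simps power2_eq_square)
  have A: "b\<^sup>2 - b\<^sup>2 * s\<^sup>2 = -2*b\<^sup>2*P*\<epsilon> - b\<^sup>2*(P*\<epsilon>)\<^sup>2"
    unfolding s_def by (simp add: power2_eq_square algebra_simps)
  have A2: "b\<^sup>2*(P*\<epsilon>)\<^sup>2 \<ge> 0" by simp
  have az: "2*a*z > 0" using z0 assms by simp
  have lhs: "- 2 * a * z - z\<^sup>2 * gv\<^sup>2 / \<epsilon>\<^sup>2 + b\<^sup>2 \<le> -2*b\<^sup>2*P*\<epsilon>"
    using zz A A2 az by linarith
  have L0: "L \<ge> 0" using assms by linarith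
  have k2: "\<kappa>\<^sup>2 \<le> gv\<^sup>2" using assms by (intro power_mono) auto
  have g1: "gd/gv\<^sup>2 \<le> L/gv\<^sup>2" using assms by (intro divide_right_mono) auto
  have g2: "L/gv\<^sup>2 \<le> L/\<kappa>\<^sup>2" by (rule divide_left_mono[OF k2 L0]) (use assms in simp)
  have bes: "b*\<epsilon> * s \<ge> 0" "b*\<epsilon> * s \<le> 2*b*\<epsilon>" using s1 assms by auto
  have Lk: "L/\<kappa>\<^sup>2 \<ge> 0" using L0 by simp
  have "(b*\<epsilon> * s) * (gd/gv\<^sup>2) \<le> (b*\<epsilon> * s) * (L/\<kappa>\<^sup>2)"
    using g1 g2 bes by (intro mult_left_mono) auto
  also have "\<dots> \<le> (2*b*\<epsilon>) * (L/\<kappa>\<^sup>2)" by (rule mult_right_mono[OF bes(2) Lk])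
  finally have r: "(b*\<epsilon> * s) * (gd/gv\<^sup>2) \<le> (2*b*\<epsilon>) * (L/\<kappa>\<^sup>2)" .
  have st1: "(b*\<epsilon>) * (L/\<kappa>\<^sup>2 + b) \<le> (b*\<epsilon>) * (b*P)" using assms by (intro mult_left_mono) auto
  have st2: "(b*\<epsilon>) * (L/\<kappa>\<^sup>2 + b) = b*\<epsilon>*(L/\<kappa>\<^sup>2) + b\<^sup>2*\<epsilon>"
    by (simp add: algebra_simps power2_eq_square)
  have st3: "(b*\<epsilon>) * (b*P) = b\<^sup>2*P*\<epsilon>" by (simp add: algebra_simps power2_eq_square)
  have st4: "b\<^sup>2*\<epsilon> > 0" using assms by simp
  have st5: "b*\<epsilon>*(L/\<kappa>\<^sup>2) < b\<^sup>2*P*\<epsilon>" using st1 st2 st3 st4 by linarith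
  have st: "2*b\<^sup>2*P*\<epsilon> > (2*b*\<epsilon>) * (L/\<kappa>\<^sup>2)"
  proof -
    have "(2*b*\<epsilon>) * (L/\<kappa>\<^sup>2) = 2*(b*\<epsilon>*(L/\<kappa>\<^sup>2))" by simp
    moreover have "2*b\<^sup>2*P*\<epsilon> = 2*(b\<^sup>2*P*\<epsilon>)" by simp
    ultimately show ?thesis using st5 by linarith
  qed
  have "- 2 * a * z - z\<^sup>2 * gv\<^sup>2 / \<epsilon>\<^sup>2 + b\<^sup>2 < -((b*\<epsilon> * s) * (gd/gv\<^sup>2))"
    using lhs r st by linarith
  then show ?thesis unfolding z_def s_def by simp
qed

lemma lower_alg:
  fixes a b \<epsilon> \<kappa> L P Q E gv gd :: real
  assumes "a>0" "b>0" "\<epsilon>>0" "\<kappa>>0" "\<kappa> \<le> gv" "\<bar>gd\<bar> \<le> L" "b*P \<ge> 2*a/\<kappa> + L/\<kappa>\<^sup>2 + b"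
    "P*\<epsilon> \<le> 1" "P \<ge> 0" "0 < E" "E \<le> 1" "Q = 1 - P*\<epsilon>"
  shows "b*Q*(b*\<kappa>/2)*E/gv - b*\<epsilon>*Q*(1-E)*gd/gv\<^sup>2
     < - 2 * a * (b*\<epsilon>*Q*(1-E)/gv) - (b*\<epsilon>*Q*(1-E)/gv)\<^sup>2 * gv\<^sup>2 / \<epsilon>\<^sup>2 + b\<^sup>2"
proof -
  define m where "m = Q*(1-E)"
  define \<eta> where "\<eta> = P*\<epsilon> + Q*E"
  have m\<eta>: "m = 1 - \<eta>" unfolding m_def \<eta>_def using assms(12) by (simp add: algebra_simps)
  have gv0: "gv > 0" using assms by linarith
  have Q01: "Q \<ge> 0" "Q \<le> 1" using assms by auto
  have m01: "m \<ge> 0" "m \<le> 1" unfolding m_def using Q01 assms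
    by (auto intro: mult_nonneg_nonneg mult_le_one)
  have QE: "Q*E \<ge> 0" using Q01 assms by simp
  have eta: "\<eta> \<ge> 0" "\<eta> \<le> 1" using m\<eta> m01 by auto
  have zz: "(b*\<epsilon>*m/gv)\<^sup>2 * gv\<^sup>2 / \<epsilon>\<^sup>2 = b\<^sup>2 * (1-\<eta>)\<^sup>2"
    unfolding m\<eta> using gv0 assms by (simp add: field_simps power2_eq_square)
  have F1: "b\<^sup>2 - b\<^sup>2 * (1-\<eta>)\<^sup>2 \<ge> b\<^sup>2*\<eta>"
  proof -
    have "b\<^sup>2 - b\<^sup>2 * (1-\<eta>)\<^sup>2 - b\<^sup>2*\<eta> = b\<^sup>2*(\<eta>*(1-\<eta>))" by (simp add: power2_eq_square algebra_simps)
    moreover have "b\<^sup>2*(\<eta>*(1-\<eta>)) \<ge> 0" using eta by simp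
    ultimately show ?thesis by linarith
  qed
  have az: "2*a*(b*\<epsilon>*m/gv) \<le> 2*a*b*\<epsilon>/\<kappa>"
  proof -
    have "b*\<epsilon>*m \<le> b*\<epsilon>" using m01 assms by simp
    then have "b*\<epsilon>*m/gv \<le> b*\<epsilon>/gv" using gv0 by (simp add: divide_right_mono)
    also have "\<dots> \<le> b*\<epsilon>/\<kappa>" using assms by (intro divide_left_mono) auto
    finally have "b*\<epsilon>*m/gv \<le> b*\<epsilon>/\<kappa>" .
    then have "2*a*(b*\<epsilon>*m/gv) \<le> 2*a*(b*\<epsilon>/\<kappa>)" using assms by (intro mult_left_mono) auto
    then show ?thesis by simp
  qed
  have t1: "b*Q*(b*\<kappa>/2)*E/gv \<le> b\<^sup>2*(Q*E)/2"
  proof -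
    have "b*Q*(b*\<kappa>/2)*E/gv \<le> b*Q*(b*\<kappa>/2)*E/\<kappa>"
      using assms Q01 by (intro divide_left_mono) auto
    also have "\<dots> = b\<^sup>2*(Q*E)/2" using assms by (simp add: field_simps power2_eq_square)
    finally show ?thesis .
  qed
  have L0: "L \<ge> 0" using assms by linarith
  have t2: "- (b*\<epsilon>*m*gd/gv\<^sup>2) \<le> b*\<epsilon>*L/\<kappa>\<^sup>2"
  proof -
    have k2: "\<kappa>\<^sup>2 \<le> gv\<^sup>2" using assms by (intro power_mono) auto
    have g1: "-gd/gv\<^sup>2 \<le> L/gv\<^sup>2" using assms by (intro divide_right_mono) auto
    have g2: "L/gv\<^sup>2 \<le> L/\<kappa>\<^sup>2" by (rule divide_left_mono[OF k2 L0]) (use assms in simp)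
    have bm: "b*\<epsilon>*m \<ge> 0" "b*\<epsilon>*m \<le> b*\<epsilon>" using m01 assms by auto
    have "(b*\<epsilon>*m) * (-gd/gv\<^sup>2) \<le> (b*\<epsilon>*m) * (L/\<kappa>\<^sup>2)"
      using g1 g2 bm by (intro mult_left_mono) auto
    also have "\<dots> \<le> (b*\<epsilon>) * (L/\<kappa>\<^sup>2)" by (rule mult_right_mono[OF bm(2)]) (use L0 in simp)
    finally show ?thesis by simp
  qed
  have "(b*\<epsilon>) * (2*a/\<kappa> + L/\<kappa>\<^sup>2 + b) \<le> (b*\<epsilon>) * (b*P)" using assms by (intro mult_left_mono) auto
  then have st: "b\<^sup>2*(P*\<epsilon>) \<ge> 2*a*b*\<epsilon>/\<kappa> + b*\<epsilon>*L/\<kappa>\<^sup>2 + b\<^sup>2*\<epsilon>"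
    by (simp add: algebra_simps power2_eq_square)
  have be: "b\<^sup>2*\<epsilon> > 0" using assms by simp
  have etaeq: "b\<^sup>2*\<eta> = b\<^sup>2*(P*\<epsilon>) + b\<^sup>2*(Q*E)" unfolding \<eta>_def by (simp add: algebra_simps)
  have QE2: "b\<^sup>2*(Q*E) \<ge> 0" using QE by simp
  have "b*Q*(b*\<kappa>/2)*E/gv - b*\<epsilon>*m*gd/gv\<^sup>2
     < - 2 * a * (b*\<epsilon>*m/gv) - (b*\<epsilon>*m/gv)\<^sup>2 * gv\<^sup>2 / \<epsilon>\<^sup>2 + b\<^sup>2"
    using zz F1 az t1 t2 st be etaeq QE2 by linarith
  then show ?thesis unfolding m_def by (simp add: mult.assoc)
qed

lemma periodic_int:
  fixes f :: "real \<Rightarrow> real"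
  assumes "\<And>t. f (t + 1) = f t"
  shows "f (x + real_of_int k) = f x"
proof -
  have n: "f (y + real n) = f y" for y n
  proof (induction n)
    case (Suc n)
    have "y + real (Suc n) = (y + real n) + 1" by simp
    then show ?case using Suc assms by metis
  qed simp
  show ?thesis
  proof (cases "k \<ge> 0")
    case True
    then show ?thesis using n[of x "nat k"] by simp
  next
    case False
    then have "f (x + real_of_int k + real (nat (-k))) = f (x + real_of_int k)" by (rule_tac n)
    then show ?thesis using False by simp
  qed
qed

theorem lemma1:
  fixes a b T \<theta> t0 :: real
    and f f' f'' :: "real \<Rightarrow> real"
    and \<gamma> :: "real \<Rightarrow> real \<Rightarrow> real"
  assumes "a > 0" "b > 0" "T > 0" "\<theta> > 0"
    and periodic: "\<And>t. f (t + 1) = f t"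
    and f_deriv: "\<And>t. (f has_real_derivative f' t) (at t)"
    and f'_deriv: "\<And>t. (f' has_real_derivative f'' t) (at t)"
    and f''_cont: "continuous_on UNIV f''"
    and kappa_pos: "(INF t\<in>{0..1}. f t) > 0"
    and init: "\<And>\<epsilon>. \<epsilon> > 0 \<Longrightarrow> \<gamma> \<epsilon> 0 = 0"
    and riccati: "\<And>\<epsilon> t. \<epsilon> > 0 \<Longrightarrow> t \<in> {0..T} \<Longrightarrow>
       (\<gamma> \<epsilon> has_real_derivative
          (- 2 * a * \<gamma> \<epsilon> t - (\<gamma> \<epsilon> t)\<^sup>2 * (f (\<theta> * t))\<^sup>2 / \<epsilon>\<^sup>2 + b\<^sup>2))
        (at t within {0..T})"
    and "0 < t0" "t0 \<le> T"
  shows "(\<lambda>\<epsilon>. SUP t\<in>{t0..T}. \<bar>\<gamma> \<epsilon> t - b * \<epsilon> / f (\<theta> * t)\<bar>)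
           \<in> O[at_right 0](\<lambda>\<epsilon>. \<epsilon>\<^sup>2)"
proof -
  note ab = assms(1-4)
  define \<kappa> where "\<kappa> = (INF t\<in>{0..1}. f t)"
  have \<kappa>pos: "\<kappa> > 0" using kappa_pos unfolding \<kappa>_def .
  have fcont: "continuous_on UNIV f"
    using f_deriv by (meson DERIV_isCont continuous_at_imp_continuous_on)
  have f'cont: "continuous_on UNIV f'"
    using f'_deriv by (meson DERIV_isCont continuous_at_imp_continuous_on)
  have bddf: "bdd_below (f ` {0..1})"
    by (rule bounded_imp_bdd_below, rule compact_imp_bounded, rule compact_continuous_image)
       (use fcont continuous_on_subset in auto)
  have fk01: "f x \<ge> \<kappa>" if "x \<in> {0..1}" for x
    unfolding \<kappa>_def using bddf that by (rule cINF_lower)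
  have fk: "f x \<ge> \<kappa>" for x
  proof -
    have h1: "x < of_int \<lfloor>x\<rfloor> + 1" by (rule real_of_int_floor_add_one_gt)
    have h2: "of_int \<lfloor>x\<rfloor> \<le> x" by (rule of_int_floor_le)
    have h3: "x - of_int \<lfloor>x\<rfloor> \<le> 1" using h1 by linarith
    have h4: "0 \<le> x - of_int \<lfloor>x\<rfloor>" using h2 by linarith
    have "x - of_int \<lfloor>x\<rfloor> \<in> {0..1}" unfolding atLeastAtMost_iff using h3 h4 by blast
    then have h5: "f (x - of_int \<lfloor>x\<rfloor>) \<ge> \<kappa>" by (rule fk01)
    have "f x = f ((x - of_int \<lfloor>x\<rfloor>) + of_int \<lfloor>x\<rfloor>)" by simp
    also have "\<dots> = f (x - of_int \<lfloor>x\<rfloor>)" by (rule periodic_int[of f, OF periodic])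
    finally show ?thesis using h5 by simp
  qed
  obtain B where B: "\<And>x. x \<in> {0..\<theta>*T} \<Longrightarrow> \<bar>f' x\<bar> \<le> B"
  proof -
    have "bounded (f' ` {0..\<theta>*T})"
      by (rule compact_imp_bounded, rule compact_continuous_image)
         (use f'cont continuous_on_subset in auto)
    then show ?thesis using that unfolding bounded_real by (auto simp del: atLeastAtMost_iff)
  qed
  have B0: "B \<ge> 0" using B[of 0] ab by auto
  define L where "L = \<theta> * B"
  define g where "g t = f (\<theta> * t)" for t
  define g' where "g' t = \<theta> * f' (\<theta> * t)" for t
  have gder: "(g has_real_derivative g' t) (at t)" for t
  proof -
    have "((\<lambda>t. \<theta>*t) has_real_derivative \<theta>) (at t)" by (auto intro!: derivative_eq_intros)
    from DERIV_chain2[OF f_deriv this] have "((\<lambda>x. f (\<theta> * x)) has_real_derivative \<theta> * f' (\<theta> * t)) (at t)"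
      by (simp add: mult.commute)
    moreover have "g = (\<lambda>x. f (\<theta> * x))" by (simp add: g_def fun_eq_iff)
    ultimately show ?thesis by (simp add: g'_def)
  qed
  have gk: "g t \<ge> \<kappa>" for t unfolding g_def by (rule fk)
  have gpos: "g t > 0" for t using gk[of t] \<kappa>pos by linarith
  have g'L: "\<bar>g' t\<bar> \<le> L" if "t \<in> {0..T}" for t
  proof -
    have "\<theta> * t \<in> {0..\<theta>*T}" using that ab by (auto intro: mult_left_mono)
    then have "\<bar>f' (\<theta> * t)\<bar> \<le> B" by (rule B)
    then show ?thesis unfolding g'_def L_def using ab by (simp add: abs_mult)
  qed
  have L0: "L \<ge> 0" unfolding L_def using B0 ab by simp
  define P where "P = (2*a/\<kappa> + L/\<kappa>\<^sup>2)/b + 1"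
  have P0: "P \<ge> 0" unfolding P_def using ab \<kappa>pos L0 by simp
  have bP: "b*P = 2*a/\<kappa> + L/\<kappa>\<^sup>2 + b" unfolding P_def using ab by (simp add: field_simps)
  have bP': "b*P \<ge> L/\<kappa>\<^sup>2 + b" using bP ab \<kappa>pos by simp
  define lam where "lam = b*\<kappa>/2"
  have lam0: "lam > 0" unfolding lam_def using ab \<kappa>pos by simp
  define C where "C = b*(P+1)/\<kappa>"
  have bound: "\<bar>\<gamma> \<epsilon> t - b*\<epsilon>/f (\<theta>*t)\<bar> \<le> C*\<epsilon>\<^sup>2"
    if e: "\<epsilon> > 0" "P*\<epsilon> \<le> 1" "\<epsilon> \<le> (lam*t0)\<^sup>2/4" and t: "t \<in> {t0..T}" for \<epsilon> t
  proof -
    have tT: "t \<in> {0..T}" using t assms by auto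
    define u where "u s = b*\<epsilon>*(1+P*\<epsilon>)/g s" for s
    define u' where "u' s = -(b*\<epsilon>*(1+P*\<epsilon>)) * g' s / (g s)\<^sup>2" for s
    have uder: "(u has_real_derivative u' s) (at s)" for s
    proof -
      have "((\<lambda>s. b*\<epsilon>*(1+P*\<epsilon>) / g s) has_real_derivative
          (0 * g s - b*\<epsilon>*(1+P*\<epsilon>) * g' s) / (g s * g s)) (at s)"
        by (rule DERIV_divide[OF DERIV_const gder]) (use gpos[of s] in simp)
      moreover have "u = (\<lambda>s. b*\<epsilon>*(1+P*\<epsilon>) / g s)" by (simp add: u_def fun_eq_iff)
      ultimately show ?thesis by (simp add: u'_def power2_eq_square)
    qed
    have up: "\<gamma> \<epsilon> t - u t \<le> 0"
    proof (rule barrier[where h="\<lambda>s. \<gamma> \<epsilon> s - u s" and T=T and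
          h'="\<lambda>s. (- 2 * a * \<gamma> \<epsilon> s - (\<gamma> \<epsilon> s)\<^sup>2 * (f (\<theta> * s))\<^sup>2 / \<epsilon>\<^sup>2 + b\<^sup>2) - u' s"])
      fix s assume s: "s \<in> {0..T}"
      show "((\<lambda>s. \<gamma> \<epsilon> s - u s) has_real_derivative
          (- 2 * a * \<gamma> \<epsilon> s - (\<gamma> \<epsilon> s)\<^sup>2 * (f (\<theta> * s))\<^sup>2 / \<epsilon>\<^sup>2 + b\<^sup>2) - u' s) (at s within {0..T})"
        by (rule DERIV_diff[OF riccati[OF e(1) s] has_field_derivative_at_within[OF uder]])
      assume "\<gamma> \<epsilon> s - u s = 0"
      then have eq: "\<gamma> \<epsilon> s = b*\<epsilon>*(1+P*\<epsilon>)/g s" unfolding u_def by simp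
      have "- 2 * a * (b*\<epsilon>*(1+P*\<epsilon>)/g s) - (b*\<epsilon>*(1+P*\<epsilon>)/g s)\<^sup>2 * (g s)\<^sup>2 / \<epsilon>\<^sup>2 + b\<^sup>2
          < -(b*\<epsilon>*(1+P*\<epsilon>)) * g' s / (g s)\<^sup>2"
        by (rule upper_alg[OF ab(1,2) e(1) \<kappa>pos gk g'L[OF s] bP' e(2) P0])
      then show "(- 2 * a * \<gamma> \<epsilon> s - (\<gamma> \<epsilon> s)\<^sup>2 * (f (\<theta> * s))\<^sup>2 / \<epsilon>\<^sup>2 + b\<^sup>2) - u' s < 0"
        unfolding eq u'_def g_def by simp
    next
      show "\<gamma> \<epsilon> 0 - u 0 \<le> 0" using init[OF e(1)] gpos[of 0] e P0 ab unfolding u_def by simp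
    qed (use tT in auto)
    define Q where "Q = 1 - P*\<epsilon>"
    define E where "E s = exp (-(lam * s/\<epsilon>))" for s
    define w where "w s = b*\<epsilon>*Q*(1 - E s)/g s" for s
    define w' where "w' s = b*Q*(b*\<kappa>/2)*E s/g s - b*\<epsilon>*Q*(1-E s)*g' s/(g s)\<^sup>2" for s
    have wder: "(w has_real_derivative w' s) (at s)" for s
    proof -
      have N: "((\<lambda>s. b*\<epsilon>*Q*(1 - exp (-(lam * s/\<epsilon>)))) has_real_derivative
          b*\<epsilon>*Q*(exp (-(lam * s/\<epsilon>)) * (lam/\<epsilon>))) (at s)"
        by (auto intro!: derivative_eq_intros)
      have "((\<lambda>s. b*\<epsilon>*Q*(1 - exp (-(lam * s/\<epsilon>))) / g s) has_real_derivative
          (b*\<epsilon>*Q*(exp (-(lam * s/\<epsilon>)) * (lam/\<epsilon>)) * g s - b*\<epsilon>*Q*(1 - exp (-(lam * s/\<epsilon>))) * g' s) / (g s * g s)) (at s)"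
        by (rule DERIV_divide[OF N gder]) (use gpos[of s] in simp)
      moreover have "w = (\<lambda>s. b*\<epsilon>*Q*(1 - exp (-(lam * s/\<epsilon>))) / g s)" by (simp add: w_def E_def fun_eq_iff)
      ultimately show ?thesis using e(1) gpos[of s]
        by (simp add: w'_def E_def power2_eq_square lam_def field_simps)
    qed
    have lo: "w t - \<gamma> \<epsilon> t \<le> 0"
    proof (rule barrier[where h="\<lambda>s. w s - \<gamma> \<epsilon> s" and T=T and
          h'="\<lambda>s. w' s - (- 2 * a * \<gamma> \<epsilon> s - (\<gamma> \<epsilon> s)\<^sup>2 * (f (\<theta> * s))\<^sup>2 / \<epsilon>\<^sup>2 + b\<^sup>2)"])
      fix s assume s: "s \<in> {0..T}"
      show "((\<lambda>s. w s - \<gamma> \<epsilon> s) has_real_derivative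
          w' s - (- 2 * a * \<gamma> \<epsilon> s - (\<gamma> \<epsilon> s)\<^sup>2 * (f (\<theta> * s))\<^sup>2 / \<epsilon>\<^sup>2 + b\<^sup>2)) (at s within {0..T})"
        by (rule DERIV_diff[OF has_field_derivative_at_within[OF wder] riccati[OF e(1) s]])
      assume "w s - \<gamma> \<epsilon> s = 0"
      then have eq: "\<gamma> \<epsilon> s = b*\<epsilon>*Q*(1 - E s)/g s" unfolding w_def by simp
      have E1: "E s \<le> 1" "E s > 0" unfolding E_def using s lam0 e(1) by auto
      have "b*Q*(b*\<kappa>/2)*E s/g s - b*\<epsilon>*Q*(1-E s)*g' s/(g s)\<^sup>2
         < - 2 * a * (b*\<epsilon>*Q*(1-E s)/g s) - (b*\<epsilon>*Q*(1-E s)/g s)\<^sup>2 * (g s)\<^sup>2 / \<epsilon>\<^sup>2 + b\<^sup>2"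
        by (rule lower_alg[OF ab(1,2) e(1) \<kappa>pos gk g'L[OF s] _ e(2) P0 E1(2) E1(1) Q_def])
           (use bP in simp)
      then show "w' s - (- 2 * a * \<gamma> \<epsilon> s - (\<gamma> \<epsilon> s)\<^sup>2 * (f (\<theta> * s))\<^sup>2 / \<epsilon>\<^sup>2 + b\<^sup>2) < 0"
        unfolding eq w'_def g_def by simp
    next
      show "w 0 - \<gamma> \<epsilon> 0 \<le> 0" using init[OF e(1)] unfolding w_def E_def by simp
    qed (use tT in auto)
    have Et: "E t \<le> \<epsilon>"
    proof -
      have "E t \<le> exp (-(lam*t0/\<epsilon>))" unfolding E_def
        using t lam0 e(1) by (auto simp: divide_right_mono mult_left_mono)
      also have "\<dots> \<le> \<epsilon>" using exp_small[of "lam*t0" \<epsilon>] lam0 assms e by simp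
      finally show ?thesis .
    qed
    have E0: "E t > 0" unfolding E_def by simp
    have gt: "g t \<ge> \<kappa>" by (rule gk)
    have Q01: "Q \<ge> 0" "Q \<le> 1" unfolding Q_def using e P0 by auto
    have gtp: "g t > 0" by (rule gpos)
    have d1: "\<gamma> \<epsilon> t - b*\<epsilon>/g t \<le> b*P*\<epsilon>\<^sup>2/g t"
    proof -
      have "u t - b*\<epsilon>/g t = b*P*\<epsilon>\<^sup>2/g t" unfolding u_def using gtp
        by (simp add: field_simps power2_eq_square)
      then show ?thesis using up by linarith
    qed
    have num1: "b*P*\<epsilon>\<^sup>2 \<ge> 0" using ab P0 by simp
    have "b*P*\<epsilon>\<^sup>2/g t \<le> b*P*\<epsilon>\<^sup>2/\<kappa>"
      by (rule divide_left_mono[OF gt num1]) (use \<kappa>pos gtp in simp)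
    also have "\<dots> \<le> C*\<epsilon>\<^sup>2" unfolding C_def using ab \<kappa>pos
      by (simp add: field_simps)
    finally have d2: "b*P*\<epsilon>\<^sup>2/g t \<le> C*\<epsilon>\<^sup>2" .
    have d3: "b*\<epsilon>/g t - \<gamma> \<epsilon> t \<le> b*\<epsilon>*(P*\<epsilon> + Q*E t)/g t"
    proof -
      have "b*\<epsilon>/g t - w t = b*\<epsilon>*(P*\<epsilon> + Q*E t)/g t" unfolding w_def Q_def using gtp
        by (simp add: field_simps power2_eq_square)
      then show ?thesis using lo by linarith
    qed
    have QE: "Q*E t \<le> \<epsilon>" using mult_mono[OF Q01(2) Et] Q01 E0 by simp
    have num2: "b*\<epsilon>*(P*\<epsilon> + Q*E t) \<le> b*\<epsilon>*(P*\<epsilon> + \<epsilon>)"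
      using QE ab e(1) by (intro mult_left_mono) auto
    have num2': "b*\<epsilon>*(P*\<epsilon> + Q*E t) \<ge> 0" using ab e(1) P0 Q01 E0 by simp
    have "b*\<epsilon>*(P*\<epsilon> + Q*E t)/g t \<le> b*\<epsilon>*(P*\<epsilon> + Q*E t)/\<kappa>"
      by (rule divide_left_mono[OF gt num2']) (use \<kappa>pos gtp in simp)
    also have "\<dots> \<le> b*\<epsilon>*(P*\<epsilon> + \<epsilon>)/\<kappa>"
      by (rule divide_right_mono[OF num2]) (use \<kappa>pos in simp)
    also have "\<dots> = C*\<epsilon>\<^sup>2" unfolding C_def using \<kappa>pos by (simp add: field_simps power2_eq_square)
    finally have d4: "b*\<epsilon>*(P*\<epsilon> + Q*E t)/g t \<le> C*\<epsilon>\<^sup>2" .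
    show ?thesis using d1 d2 d3 d4 unfolding g_def abs_le_iff by linarith
  qed
  have ev: "eventually (\<lambda>\<epsilon>. \<epsilon> > 0 \<and> P*\<epsilon> \<le> 1 \<and> \<epsilon> \<le> (lam*t0)\<^sup>2/4) (at_right 0)"
  proof -
    define \<delta> where "\<delta> = min (1/(P+1)) ((lam*t0)\<^sup>2/4)"
    have \<delta>0: "\<delta> > 0" unfolding \<delta>_def using P0 lam0 assms by simp
    have "P*\<epsilon> \<le> 1 \<and> \<epsilon> \<le> (lam*t0)\<^sup>2/4" if "\<epsilon> > 0" "\<epsilon> < \<delta>" for \<epsilon>
    proof
      have "\<epsilon> < 1/(P+1)" using that unfolding \<delta>_def by simp
      then have "\<epsilon>*(P+1) < 1" using P0 by (simp add: field_simps)
      then show "P*\<epsilon> \<le> 1" using that by (simp add: algebra_simps)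
      show "\<epsilon> \<le> (lam*t0)\<^sup>2/4" using that unfolding \<delta>_def by simp
    qed
    then show ?thesis unfolding eventually_at_right_field using \<delta>0 by auto
  qed
  show ?thesis
  proof (rule bigoI[where c=C])
    show "\<forall>\<^sub>F \<epsilon> in at_right 0. norm (SUP t\<in>{t0..T}. \<bar>\<gamma> \<epsilon> t - b * \<epsilon> / f (\<theta> * t)\<bar>) \<le> C * norm (\<epsilon>\<^sup>2)"
      using ev
    proof eventually_elim
      case (elim \<epsilon>)
      have bd: "\<bar>\<gamma> \<epsilon> t - b * \<epsilon> / f (\<theta> * t)\<bar> \<le> C*\<epsilon>\<^sup>2" if "t \<in> {t0..T}" for t
        using bound[of \<epsilon> t] elim that by auto
      have ne: "{t0..T} \<noteq> {}" using assms by simp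
      have le: "(SUP t\<in>{t0..T}. \<bar>\<gamma> \<epsilon> t - b * \<epsilon> / f (\<theta> * t)\<bar>) \<le> C*\<epsilon>\<^sup>2"
        by (rule cSUP_least[OF ne bd])
      have bdd: "bdd_above ((\<lambda>t. \<bar>\<gamma> \<epsilon> t - b * \<epsilon> / f (\<theta> * t)\<bar>) ` {t0..T})"
        using bd by (intro bdd_aboveI2) auto
      have "0 \<le> \<bar>\<gamma> \<epsilon> t0 - b * \<epsilon> / f (\<theta> * t0)\<bar>" by simp
      also have "\<dots> \<le> (SUP t\<in>{t0..T}. \<bar>\<gamma> \<epsilon> t - b * \<epsilon> / f (\<theta> * t)\<bar>)"
        by (rule cSUP_upper[OF _ bdd]) (use assms in simp)
      finally have ge: "0 \<le> (SUP t\<in>{t0..T}. \<bar>\<gamma> \<epsilon> t - b * \<epsilon> / f (\<theta> * t)\<bar>)" .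
      show ?case using le ge by simp
    qed
  qed
qed
end
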